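(* Let $C\subseteq\mathbb{F}_q^n$ be a linear code and $(A,B)$ a $2$-power $t$-error locating pair for $C$. Let $\mathbf{y}=\mathbf{c}+\mathbf{e}$ with $\mathbf{c}\in C$, $\mathrm{w}(\mathbf{e})=t$, $I_{\mathbf{e}}=\mathrm{supp}(\mathbf{e})$, and $M=M_1\cap M_2$ with $M_1=\{\mathbf{a}\in A\mid \langle \mathbf{a}*\mathbf{y},\mathbf{b}\rangle=0\ \forall \mathbf{b}\in B\}$, $M_2=\{\mathbf{a}\in A\mid \langle \mathbf{a}*\mathbf{y}^2,\mathbf{v}\rangle=0\ \forall \mathbf{v}\in (B^{\perp}*C)^{\perp}\}$. The following are equivalent: (i) $M=A(I_{\mathbf{e}})$; (ii) $M(I_{\mathbf{e}})=M$; (iii) $M_{I_{\mathbf{e}}}=\{0\}$.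
   Context: All codes are $\mathbb{F}_q$-linear subspaces of $\mathbb{F}_q^n$. $\mathbf{u}*\mathbf{v}=(u_1v_1,\dots,u_nv_n)$, $\mathbf{u}^i=(u_1^i,\dots,u_n^i)$; $A*B$ is the span of all $\mathbf{a}*\mathbf{b}$; $\langle\mathbf{u},\mathbf{v}\rangle=\sum_iu_iv_i$, $X^\perp$ the dual. $\mathrm{w}$ Hamming weight, $\mathrm{d}$ minimum distance. For $J=\{j_1<\dots<j_s\}$, $\mathbf{x}_J=(x_{j_1},\dots,x_{j_s})$, $X_J=\{\mathbf{x}_J:\mathbf{x}\in X\}\subseteq\mathbb{F}_q^{|J|}$ (puncturing, keeping the coordinates in $J$), and $X(J)=\{\mathbf{x}\in X:\mathbf{x}_J=\mathbf{0}\}\subseteq\mathbb{F}_q^n$. A pair $(A,B)$ is a $2$-power $t$-error locating pair for $C$ if: (1) $A*B\subseteq C^\perp$; (2) $\dim A>t$; (3) $\mathrm{d}(A^\perp)>t$; (4) $\mathrm{d}(A)+\mathrm{d}(C)>n$; (5) $\dim B+\dim (B^\perp*C)^\perp\ge t$. *)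

theory Defs
  imports "HOL-Analysis.Analysis"
begin

text \<open>Vectors of F_q^n are modelled as 'a ^ 'n with 'a a finite field and 'n a finite
  index type of cardinality n. Codes are subspaces w.r.t. the library scalar
  multiplication (*s); dimension is vec.dim. The componentwise (Schur) product
  u * v is the library's componentwise times on vec.\<close>

definition vpow :: "'a::field ^ 'n \<Rightarrow> nat \<Rightarrow> 'a ^ 'n" where
  "vpow u k = (\<chi> i. (u $ i) ^ k)"

definition schur_code :: "('a::field ^ 'n) set \<Rightarrow> ('a ^ 'n) set \<Rightarrow> ('a ^ 'n) set" where
  "schur_code A B = vec.span {a * b | a b. a \<in> A \<and> b \<in> B}"

definition dotp :: "'a::field ^ 'n \<Rightarrow> 'a ^ 'n \<Rightarrow> 'a" where
  "dotp u v = (\<Sum>i\<in>UNIV. u $ i * v $ i)"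

definition dual :: "('a::field ^ 'n) set \<Rightarrow> ('a ^ 'n) set" where
  "dual X = {y. \<forall>x\<in>X. dotp x y = 0}"

definition supp :: "'a::zero ^ 'n \<Rightarrow> 'n set" where
  "supp x = {i. x $ i \<noteq> 0}"

definition hweight :: "'a::zero ^ 'n \<Rightarrow> nat" where
  "hweight x = card (supp x)"

text \<open>Minimum distance; for the zero code we use the convention d = n + 1
  (i.e. larger than any possible weight, playing the role of infinity).\<close>
definition mindist :: "('a::zero ^ 'n) set \<Rightarrow> nat" where
  "mindist X = (if X \<subseteq> {0} then CARD('n) + 1
                else Min (hweight ` (X - {0})))"

definition shorten :: "('a::zero ^ 'n) set \<Rightarrow> 'n set \<Rightarrow> ('a ^ 'n) set" where
  "shorten X J = {x \<in> X. \<forall>j\<in>J. x $ j = 0}"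

text \<open>Puncturing X_J: keep the coordinates in J. Realised by zeroing the
  coordinates outside J (canonically isomorphic to the subset of F_q^|J|).\<close>
definition punct :: "('a::zero ^ 'n) set \<Rightarrow> 'n set \<Rightarrow> ('a ^ 'n) set" where
  "punct X J = (\<lambda>x. \<chi> i. if i \<in> J then x $ i else 0) ` X"

definition two_power_ELP ::
  "('a::{field,finite} ^ 'n) set \<Rightarrow> ('a ^ 'n) set \<Rightarrow> ('a ^ 'n) set \<Rightarrow> nat \<Rightarrow> bool" where
  "two_power_ELP A B C t \<longleftrightarrow>
     vec.subspace A \<and> vec.subspace B \<and>
     schur_code A B \<subseteq> dual C \<and>
     vec.dim A > t \<and>
     mindist (dual A) > t \<and>
     mindist A + mindist C > CARD('n) \<and>
     vec.dim B + vec.dim (dual (schur_code (dual B) C)) \<ge> t"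

end

theory Submission
  imports Defs
begin

lemma dotp_assoc: "dotp (a * c) b = dotp c (a * (b::'a::field^'n))"
  unfolding dotp_def by (auto intro!: sum.cong simp: algebra_simps)

lemma dotp_assoc2: "dotp ((a * c) * c) v = dotp (a * (c * (c::'a::field^'n))) v"
  by (simp add: mult.assoc)

theorem lemma3p7:
  fixes C A B :: "('a::{field,finite} ^ 'n) set"
    and c e y :: "'a ^ 'n" and t :: nat
  assumes "vec.subspace C"
    and "two_power_ELP A B C t"
    and "c \<in> C" and "hweight e = t" and "y = c + e"
  defines "M1 \<equiv> {a \<in> A. \<forall>b\<in>B. dotp (a * y) b = 0}"
    and "M2 \<equiv> {a \<in> A. \<forall>v\<in>dual (schur_code (dual B) C). dotp (a * vpow y 2) v = 0}"
  defines "M \<equiv> M1 \<inter> M2"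
  shows "(M = shorten A (supp e) \<longleftrightarrow> shorten M (supp e) = M)
       \<and> (shorten M (supp e) = M \<longleftrightarrow> punct M (supp e) = {0})"
proof -
  let ?I = "supp e"
  have sAB: "schur_code A B \<subseteq> dual C" and subA: "vec.subspace A"
    using assms(2) unfolding two_power_ELP_def by auto
  have MA: "M \<subseteq> A" unfolding M_def M1_def by auto
  have key: "shorten A ?I \<subseteq> M"
  proof
    fix a assume a: "a \<in> shorten A ?I"
    hence aA: "a \<in> A" and az: "\<forall>j\<in>?I. a $ j = 0" unfolding shorten_def by auto
    have ay: "a * y = a * c"
      using az unfolding assms(5) supp_def by (auto simp: vec_eq_iff algebra_simps)
    have ay2: "a * vpow y 2 = (a * c) * c"
    proof -
      have "\<And>i. a $ i * (c $ i + e $ i)^2 = a $ i * c $ i * c $ i"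
      proof -
        fix i show "a $ i * (c $ i + e $ i)^2 = a $ i * c $ i * c $ i"
          using az unfolding supp_def by (cases "e $ i = 0") (auto simp: power2_eq_square)
      qed
      thus ?thesis unfolding assms(5) vpow_def by (simp add: vec_eq_iff)
    qed
    have m1: "\<forall>b\<in>B. dotp (a * c) b = 0"
    proof
      fix b assume b: "b \<in> B"
      have "a * b \<in> schur_code A B" unfolding schur_code_def
        by (rule vec.span_base) (use aA b in blast)
      hence "a * b \<in> dual C" using sAB by auto
      thus "dotp (a * c) b = 0" using assms(3) unfolding dual_def dotp_assoc by auto
    qed
    hence acB: "a * c \<in> dual B" unfolding dual_def
      by (auto simp: dotp_def mult.commute)
    have m2: "\<forall>v\<in>dual (schur_code (dual B) C). dotp ((a * c) * c) v = 0"
    proof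
      fix v assume v: "v \<in> dual (schur_code (dual B) C)"
      have "(a * c) * c \<in> schur_code (dual B) C" unfolding schur_code_def
        by (rule vec.span_base) (use acB assms(3) in blast)
      thus "dotp ((a * c) * c) v = 0" using v unfolding dual_def by auto
    qed
    show "a \<in> M" unfolding M_def M1_def M2_def using aA m1 m2 ay ay2 by auto
  qed
  have "0 \<in> A" using subA by (rule vec.subspace_0)
  hence z: "0 \<in> M" using key unfolding shorten_def by auto
  have e1: "(M = shorten A ?I \<longleftrightarrow> shorten M ?I = M)"
    using key MA unfolding shorten_def by blast
  have pz: "\<And>x. ((\<chi> i. if i \<in> ?I then x $ i else 0) = 0) \<longleftrightarrow> (\<forall>j\<in>?I. x $ j = (0::'a))"
    by (auto simp: vec_eq_iff)
  have e2: "shorten M ?I = M \<longleftrightarrow> punct M ?I = {0}"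
  proof
    assume "shorten M ?I = M"
    hence "\<forall>x\<in>M. \<forall>j\<in>?I. x $ j = 0" unfolding shorten_def by blast
    hence "\<forall>x\<in>M. (\<chi> i. if i \<in> ?I then x $ i else 0) = (0::'a^'n)" using pz by blast
    thus "punct M ?I = {0}" using z unfolding punct_def by force
  next
    assume h: "punct M ?I = {0}"
    have "\<forall>x\<in>M. \<forall>j\<in>?I. x $ j = 0"
    proof
      fix x assume "x \<in> M"
      hence "(\<chi> i. if i \<in> ?I then x $ i else 0) \<in> {0}" using h unfolding punct_def by blast
      thus "\<forall>j\<in>?I. x $ j = 0" using pz by blast
    qed
    thus "shorten M ?I = M" unfolding shorten_def by blast
  qed
  show ?thesis using e1 e2 by blast
qed

end
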